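(* Let $(r_n)_{n\ge1}\in\mathrm{P}_d$. Then for $\mathcal{L}^d$-almost every $x\in\mathbb{R}^d$, the sequence $(\{nx\})_{n\ge1}$ is eutaxic in $(0,1)^d$ with respect to $(r_n)_{n\ge1}$, i.e. for $\mathcal{L}^d$-almost every $y\in(0,1)^d$ there are infinitely many $n\ge1$ with $|y-\{nx\}|<r_n$.
   Context: Fix a norm $|\cdot|$ on $\mathbb{R}^d$; $\mathcal{L}^d$ is Lebesgue measure. $\{z\}$ denotes the coordinatewise fractional part of $z\in\mathbb{R}^d$. $\mathrm{P}_d$ is the set of real sequences $(r_n)_{n\ge1}$ with $r_{n+1}\le r_n$ for all $n$, $r_n\to0$ and $\sum_nr_n^d=\infty$. *)

theory Defs
  imports "HOL-Analysis.Analysis"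
begin

text \<open>A norm on R^d (d = CARD('n)), in the usual axiomatic sense.\<close>
definition is_norm :: "(real ^ 'n \<Rightarrow> real) \<Rightarrow> bool" where
  "is_norm N \<longleftrightarrow>
     (\<forall>x. N x = 0 \<longleftrightarrow> x = 0) \<and>
     (\<forall>x y. N (x + y) \<le> N x + N y) \<and>
     (\<forall>c x. N (c *\<^sub>R x) = \<bar>c\<bar> * N x)"

definition vfrac :: "real ^ 'n \<Rightarrow> real ^ 'n" where
  "vfrac z = (\<chi> i. frac (z $ i))"

text \<open>The class P_d of sequences (r_n)_{n>=1}; the value r 0 is irrelevant.\<close>
definition P_class :: "nat \<Rightarrow> (nat \<Rightarrow> real) \<Rightarrow> bool" where
  "P_class d r \<longleftrightarrow>
     (\<forall>n\<ge>1. r (Suc n) \<le> r n) \<and> r \<longlonglongrightarrow> 0 \<and>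
     \<not> summable (\<lambda>n. r (Suc n) ^ d)"

definition open_cube :: "(real ^ 'n) set" where
  "open_cube = {y. \<forall>i. 0 < y $ i \<and> y $ i < 1}"

end

theory Submission
  imports Defs "HOL-Probability.Probability_Measure"
begin


lemma cheb_bound:
  fixes M :: "'a measure"
  assumes "prob_space M" and A: "\<And>n. A n \<in> sets M"
  and ind: "\<And>n m. n \<noteq> m \<Longrightarrow> measure M (A n \<inter> A m) \<le> measure M (A n) * measure M (A m)"
  and I: "finite I" and mu: "0 < (\<Sum>n\<in>I. measure M (A n))"
  shows "measure M {x\<in>space M. \<forall>n\<in>I. x \<notin> A n} \<le> 1 / (\<Sum>n\<in>I. measure M (A n))"
proof -
  interpret prob_space M by fact
  define p where "p n = measure M (A n)" for n
  define \<mu> where "\<mu> = (\<Sum>n\<in>I. p n)"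
  define S where "S x = (\<Sum>n\<in>I. indicator (A n) x :: real)" for x
  have intA: "integrable M (indicator (A n) :: 'a \<Rightarrow> real)" for n
    using A by (simp add: integrable_indicator_iff less_top[symmetric])
  have intAA: "integrable M (indicator (A n \<inter> A m) :: 'a \<Rightarrow> real)" for n m
    using A by (simp add: integrable_indicator_iff less_top[symmetric])
  have sq: "(S x - \<mu>)^2 = (\<Sum>n\<in>I. \<Sum>m\<in>I. indicator (A n \<inter> A m) x) - 2 * \<mu> * S x + \<mu>^2" for x
  proof -
    have "(S x)^2 = (\<Sum>n\<in>I. \<Sum>m\<in>I. indicator (A n \<inter> A m) x)"
      unfolding S_def power2_eq_square sum_product
      by (intro sum.cong refl) (auto simp: indicator_def)
    then show ?thesis by (simp add: power2_diff algebra_simps)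
  qed
  have iS: "integrable M S" unfolding S_def using intA by auto
  have eS: "integral\<^sup>L M S = \<mu>"
    unfolding S_def \<mu>_def p_def using intA A by (simp add: integral_sum)
  have eSS: "integral\<^sup>L M (\<lambda>x. \<Sum>n\<in>I. \<Sum>m\<in>I. indicator (A n \<inter> A m) x)
        = (\<Sum>n\<in>I. \<Sum>m\<in>I. measure M (A n \<inter> A m))"
    using intAA A by (simp add: integral_sum)
  have bnd: "(\<Sum>n\<in>I. \<Sum>m\<in>I. measure M (A n \<inter> A m)) \<le> \<mu> + \<mu>^2"
  proof -
    have "(\<Sum>n\<in>I. \<Sum>m\<in>I. measure M (A n \<inter> A m))
        \<le> (\<Sum>n\<in>I. \<Sum>m\<in>I. (if n = m then p n else 0) + p n * p m)"
    proof (intro sum_mono)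
      fix n m assume "n \<in> I" "m \<in> I"
      show "measure M (A n \<inter> A m) \<le> (if n = m then p n else 0) + p n * p m"
      proof (cases "n = m")
        case True then show ?thesis by (simp add: p_def)
      next
        case False then show ?thesis using ind[OF False] by (simp add: p_def)
      qed
    qed
    also have "\<dots> = \<mu> + \<mu>^2"
      using I by (simp add: sum.distrib \<mu>_def power2_eq_square sum_product)
    finally show ?thesis .
  qed
  have iT: "integrable M (\<lambda>x. (S x - \<mu>)^2)"
    unfolding sq using intAA iS by auto
  have eT: "integral\<^sup>L M (\<lambda>x. (S x - \<mu>)^2) \<le> \<mu>"
  proof -
    have "integral\<^sup>L M (\<lambda>x. (S x - \<mu>)^2)
       = (\<Sum>n\<in>I. \<Sum>m\<in>I. measure M (A n \<inter> A m)) - 2 * \<mu> * \<mu> + \<mu>^2"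
    proof -
      have iF: "integrable M (\<lambda>x. \<Sum>n\<in>I. \<Sum>m\<in>I. indicator (A n \<inter> A m) x :: real)"
        using intAA by auto
      have i2: "integrable M (\<lambda>x. 2 * \<mu> * S x)" using iS by auto
      have "integral\<^sup>L M (\<lambda>x. (\<Sum>n\<in>I. \<Sum>m\<in>I. indicator (A n \<inter> A m) x) - 2 * \<mu> * S x + \<mu>^2)
          = integral\<^sup>L M (\<lambda>x. (\<Sum>n\<in>I. \<Sum>m\<in>I. indicator (A n \<inter> A m) x) - 2 * \<mu> * S x) + \<mu>^2"
        using iF i2 by (subst Bochner_Integration.integral_add) (auto simp: prob_space)
      also have "\<dots> = (\<Sum>n\<in>I. \<Sum>m\<in>I. measure M (A n \<inter> A m)) - 2 * \<mu> * \<mu> + \<mu>^2"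
        using iF i2 eSS eS by (subst Bochner_Integration.integral_diff) auto
      finally show ?thesis unfolding sq .
    qed
    then show ?thesis using bnd by (simp add: power2_eq_square)
  qed
  have m0: "0 < \<mu>" using mu by (simp add: \<mu>_def p_def)
  have "measure M {x\<in>space M. \<mu>^2 \<le> (S x - \<mu>)^2} \<le> integral\<^sup>L M (\<lambda>x. (S x - \<mu>)^2) / \<mu>^2"
    by (rule integral_Markov_inequality_measure[OF iT, where A="space M"]) (use m0 in auto)
  also have "\<dots> \<le> \<mu> / \<mu>^2" using eT m0 by (simp add: divide_right_mono)
  also have "\<dots> = 1 / \<mu>" by (simp add: power2_eq_square)
  finally have *: "measure M {x\<in>space M. \<mu>^2 \<le> (S x - \<mu>)^2} \<le> 1 / \<mu>" .
  have sub: "{x\<in>space M. \<forall>n\<in>I. x \<notin> A n} \<subseteq> {x\<in>space M. \<mu>^2 \<le> (S x - \<mu>)^2}"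
    by (auto simp: S_def)
  have meas: "{x\<in>space M. \<mu>^2 \<le> (S x - \<mu>)^2} \<in> sets M"
  proof -
    have [measurable]: "(\<lambda>x. (S x - \<mu>)^2) \<in> borel_measurable M" using iT by auto
    show ?thesis by measurable
  qed
  have "measure M {x\<in>space M. \<forall>n\<in>I. x \<notin> A n} \<le> measure M {x\<in>space M. \<mu>^2 \<le> (S x - \<mu>)^2}"
    by (rule finite_measure_mono[OF sub meas])
  with * show ?thesis by (simp add: \<mu>_def p_def)
qed

lemma pairwise_BC:
  fixes M :: "'a measure"
  assumes "prob_space M" and A: "\<And>n. A n \<in> sets M"
  and ind: "\<And>n m. n \<noteq> m \<Longrightarrow> measure M (A n \<inter> A m) \<le> measure M (A n) * measure M (A m)"
  and div: "\<not> summable (\<lambda>n. measure M (A n))"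
  shows "AE x in M. \<exists>\<^sub>\<infinity>n. x \<in> A n"
proof -
  interpret prob_space M by fact
  define p where "p n = measure M (A n)" for n
  have p0: "0 \<le> p n" for n by (simp add: p_def)
  have unb: "\<exists>K. B < (\<Sum>n\<in>{m0..<m0+K}. p n)" for m0 B
  proof (rule ccontr)
    assume "\<not> ?thesis"
    then have b: "(\<Sum>n\<in>{m0..<m0+K}. p n) \<le> B" for K using not_less by blast
    have "(\<Sum>n<k. p n) \<le> (\<Sum>n<m0. p n) + B" for k
    proof -
      have "(\<Sum>n<k. p n) \<le> (\<Sum>n\<in>{..<m0} \<union> {m0..<m0+k}. p n)"
        by (rule sum_mono2) (auto simp: p0)
      also have "\<dots> \<le> (\<Sum>n<m0. p n) + (\<Sum>n\<in>{m0..<m0+k}. p n)"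
        by (subst sum.union_disjoint) auto
      finally show ?thesis using b[of k] by linarith
    qed
    then have "summable p" by (intro summableI_nonneg_bounded[OF p0])
    with div show False by (simp add: p_def[abs_def])
  qed
  have step: "AE x in M. \<exists>n\<ge>m0. x \<in> A n" for m0
  proof -
    define E where "E = {x\<in>space M. \<forall>n\<in>{m0..}. x \<notin> A n}"
    have Es: "E \<in> sets M" unfolding E_def using A by measurable
    have "prob E = 0"
    proof (rule ccontr)
      assume "prob E \<noteq> 0"
      then have e: "0 < prob E" by (simp add: zero_less_measure_iff)
      obtain K where K: "1 / prob E < (\<Sum>n\<in>{m0..<m0+K}. p n)" using unb by blast
      have mpos: "0 < (\<Sum>n\<in>{m0..<m0+K}. p n)" using K e
        by (smt (verit) divide_pos_pos)
      have "prob E \<le> prob {x\<in>space M. \<forall>n\<in>{m0..<m0+K}. x \<notin> A n}"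
      proof (rule finite_measure_mono)
        show "{x\<in>space M. \<forall>n\<in>{m0..<m0+K}. x \<notin> A n} \<in> sets M" using A by measurable
      qed (auto simp: E_def)
      also have "\<dots> \<le> 1 / (\<Sum>n\<in>{m0..<m0+K}. p n)"
        using cheb_bound[OF \<open>prob_space M\<close> A ind, where I="{m0..<m0+K}"] mpos by (auto simp: p_def)
      also have "\<dots> < prob E" using K e mpos
        by (metis divide_less_eq mult.commute)
      finally show False by simp
    qed
    then have "E \<in> null_sets M" using Es by (simp add: emeasure_eq_measure null_sets_def)
    then show ?thesis by (rule AE_I') (auto simp: E_def)
  qed
  then have "AE x in M. \<forall>m0. \<exists>n\<ge>m0. x \<in> A n" by (simp add: AE_all_countable)
  then show ?thesis by (rule AE_mp[OF _ AE_I2]) (simp add: INFM_nat_le)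
qed


context
  fixes N :: "real ^ 'n \<Rightarrow> real"
  assumes nN: "is_norm N"
begin

lemma N_zero: "N 0 = 0"
  using nN unfolding is_norm_def by auto

lemma N_scale: "N (c *\<^sub>R x) = \<bar>c\<bar> * N x"
  using nN unfolding is_norm_def by auto

lemma N_tri: "N (x + y) \<le> N x + N y"
  using nN unfolding is_norm_def by auto

lemma N_eq0: "N x = 0 \<longleftrightarrow> x = 0"
  using nN unfolding is_norm_def by auto

lemma N_neg: "N (- x) = N x"
  using N_scale[of "-1" x] by simp

lemma N_nonneg: "0 \<le> N x"
  using N_tri[of x "-x"] N_neg[of x] N_zero by simp

lemma N_commute: "N (x - y) = N (y - x)"
  using N_neg[of "x - y"] by simp

lemma N_diff: "\<bar>N x - N y\<bar> \<le> N (x - y)"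
  using N_tri[of "x - y" y] N_tri[of "y - x" x] N_commute[of x y] by (simp add: abs_le_iff)

lemma N_sum: "finite S \<Longrightarrow> N (sum f S) \<le> (\<Sum>i\<in>S. N (f i))"
  by (induction S rule: finite_induct) (auto simp: N_zero intro: order_trans[OF N_tri])

definition "Cu = (\<Sum>i\<in>UNIV. N (axis i (1::real)))"

lemma Cu_pos: "0 < Cu"
proof -
  obtain i :: 'n where True by auto
  have "0 < N (axis i (1::real))"
    using N_nonneg N_eq0[of "axis i 1"] by (auto simp: axis_eq_0_iff order_le_less)
  moreover have "N (axis i (1::real)) \<le> Cu" unfolding Cu_def
    by (rule member_le_sum) (auto simp: N_nonneg)
  ultimately show ?thesis by simp
qed

lemma N_upper: "N v \<le> Cu * norm v"
proof -
  have "N v = N (\<Sum>i\<in>UNIV. v $ i *\<^sub>R axis i 1)"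
    using basis_expansion[of v] by (simp add: scalar_mult_eq_scaleR)
  also have "\<dots> \<le> (\<Sum>i\<in>UNIV. N (v $ i *\<^sub>R axis i 1))" by (rule N_sum) simp
  also have "\<dots> = (\<Sum>i\<in>UNIV. \<bar>v $ i\<bar> * N (axis i 1))" by (simp add: N_scale)
  also have "\<dots> \<le> (\<Sum>i\<in>UNIV. norm v * N (axis i 1))"
    by (intro sum_mono mult_right_mono) (auto simp: N_nonneg component_le_norm_cart)
  also have "\<dots> = Cu * norm v" by (simp add: Cu_def sum_distrib_left mult.commute)
  finally show ?thesis .
qed

lemma N_cont: "continuous_on S N"
proof -
  have "Cu-lipschitz_on S N"
  proof (rule lipschitz_onI)
    fix x y assume "x \<in> S" "y \<in> S"
    have "dist (N x) (N y) \<le> N (x - y)" using N_diff by (simp add: dist_real_def)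
    also have "\<dots> \<le> Cu * dist x y" using N_upper by (simp add: dist_norm)
    finally show "dist (N x) (N y) \<le> Cu * dist x y" .
  qed (use Cu_pos in simp)
  then show ?thesis by (rule lipschitz_on_continuous_on)
qed

lemma N_lower_ex: "\<exists>m>0. \<forall>v. m * norm v \<le> N v"
proof -
  obtain i :: 'n where True by auto
  have ne: "sphere (0::real^'n) 1 \<noteq> {}"
    using norm_axis_1[of i] by (auto simp: sphere_def intro!: exI[of _ "axis i 1"])
  obtain x0 where x0: "x0 \<in> sphere 0 1" and mn: "\<forall>y\<in>sphere 0 1. N x0 \<le> N y"
    using continuous_attains_inf[OF compact_sphere ne N_cont] by blast
  have "x0 \<noteq> 0" using x0 by auto
  then have pos: "0 < N x0" using N_nonneg[of x0] N_eq0[of x0] by linarith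
  have "N x0 * norm v \<le> N v" for v
  proof (cases "v = 0")
    case True then show ?thesis by (simp add: N_zero)
  next
    case False
    then have "(1 / norm v) *\<^sub>R v \<in> sphere 0 1" by auto
    then have "N x0 \<le> N ((1 / norm v) *\<^sub>R v)" using mn by blast
    also have "\<dots> = N v / norm v" by (simp add: N_scale)
    finally show ?thesis using False by (simp add: field_simps)
  qed
  with pos show ?thesis by blast
qed

definition "Cl = (SOME m. 0 < m \<and> (\<forall>v. m * norm v \<le> N v))"

lemma Cl: "0 < Cl" "Cl * norm v \<le> N v"
  using someI_ex[OF N_lower_ex] unfolding Cl_def by auto

lemma N_comp: "Cl * \<bar>v $ i\<bar> \<le> N v"
  using Cl(2)[of v] Cl(1) component_le_norm_cart[of v i]
  by (meson mult_left_mono order.trans less_imp_le)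

end


definition Zn :: "(real ^ 'n) set" where "Zn = {j. \<forall>i. j $ i \<in> \<int>}"
definition cube :: "(real ^ 'n) set" where "cube = {x. \<forall>i. 0 \<le> x $ i \<and> x $ i < 1}"

lemma Zn_add: "a \<in> Zn \<Longrightarrow> b \<in> Zn \<Longrightarrow> a + b \<in> Zn"
  by (auto simp: Zn_def)
lemma Zn_minus: "a \<in> Zn \<Longrightarrow> - a \<in> Zn"
  by (auto simp: Zn_def)
lemma Zn_diff: "a \<in> Zn \<Longrightarrow> b \<in> Zn \<Longrightarrow> a - b \<in> Zn"
  by (auto simp: Zn_def)
lemma Zn_scale: "a \<in> Zn \<Longrightarrow> of_nat n *\<^sub>R a \<in> Zn"
  by (auto simp: Zn_def)
lemma Zn_0: "0 \<in> Zn"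
  by (auto simp: Zn_def)

lemma countable_Zn: "countable (Zn :: (real^'n) set)"
proof -
  have "Zn \<subseteq> (\<lambda>f. vec_lambda f) ` (PiE UNIV (\<lambda>_::'n. \<int>))"
  proof
    fix j :: "real^'n" assume "j \<in> Zn"
    then have "(\<lambda>i. j $ i) \<in> PiE UNIV (\<lambda>_. \<int>)" by (auto simp: Zn_def)
    then show "j \<in> (\<lambda>f. vec_lambda f) ` (PiE UNIV (\<lambda>_::'n. \<int>))"
      by (intro image_eqI[of _ _ "\<lambda>i. j $ i"]) auto
  qed
  moreover have "countable ((\<lambda>f. vec_lambda f) ` (PiE UNIV (\<lambda>_::'n. (\<int>::real set))))"
    by (intro countable_image countable_PiE) (auto simp: countable_int)
  ultimately show ?thesis by (rule countable_subset)
qed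

lemma cube_sets[measurable]: "cube \<in> sets (borel :: (real^'n) measure)"
proof -
  have "cube = (\<Inter>i. {x::real^'n. 0 \<le> x $ i} \<inter> {x. x $ i < 1})" by (auto simp: cube_def)
  also have "\<dots> \<in> sets borel"
    by (intro sets.countable_INT' sets.Int borel_closed borel_open)
       (auto intro: closed_halfspace_component_ge open_halfspace_component_lt)
  finally show ?thesis .
qed

lemma cube_lborel[measurable]: "cube \<in> sets (lborel :: (real^'n) measure)"
  by simp

lemma One_nth: "(One::real^'n) $ i = 1"
  by (simp add: cart_eq_inner_axis)

lemma Sum_Basis_nth: "(\<Sum>x\<in>(Basis::(real^'n) set). x $ i) = 1"
  using One_nth[of i] by simp

lemma emeasure_cube: "emeasure lborel (cube :: (real^'n) set) = 1"
proof -
  have "box 0 One \<subseteq> (cube :: (real^'n) set)" by (force simp: cube_def mem_box_cart Sum_Basis_nth less_imp_le)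
  moreover have "(cube :: (real^'n) set) \<subseteq> cbox 0 One" by (force simp: cube_def mem_box_cart Sum_Basis_nth less_imp_le)
  moreover have "emeasure lborel (box 0 (One::real^'n)) = 1" 
    by (simp add: emeasure_lborel_box_eq inner_Basis)
  moreover have "emeasure lborel (cbox 0 (One::real^'n)) = 1"
    by (simp add: emeasure_lborel_cbox_eq inner_Basis)
  ultimately show ?thesis
    by (metis antisym emeasure_mono sets_lborel borel_open borel_closed cube_sets
        open_box closed_cbox)
qed

definition vfloor :: "real^'n \<Rightarrow> real^'n" where "vfloor v = (\<chi> i. of_int \<lfloor>v $ i\<rfloor>)"

lemma vfloor_Zn: "vfloor v \<in> Zn" by (auto simp: vfloor_def Zn_def)

lemma plus_in_cube: "j \<in> Zn \<Longrightarrow> v + j \<in> cube \<longleftrightarrow> j = - vfloor v"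
proof -
  assume j: "j \<in> Zn"
  have "v + j \<in> cube \<longleftrightarrow> (\<forall>i. j $ i = - of_int \<lfloor>v $ i\<rfloor>)"
  proof -
    have "0 \<le> v $ i + j $ i \<and> v $ i + j $ i < 1 \<longleftrightarrow> j $ i = - of_int \<lfloor>v $ i\<rfloor>" for i
    proof -
      obtain t where t: "j $ i = of_int t" using j by (auto simp: Zn_def elim: Ints_cases)
      have "0 \<le> v $ i + j $ i \<and> v $ i + j $ i < 1 \<longleftrightarrow> \<lfloor>v $ i\<rfloor> = - t"
        unfolding floor_eq_iff t by auto
      then show ?thesis using t by (metis of_int_eq_iff of_int_minus minus_minus)
    qed
    then show ?thesis by (auto simp: cube_def)
  qed
  also have "\<dots> \<longleftrightarrow> j = - vfloor v" by (auto simp: vfloor_def vec_eq_iff)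
  finally show ?thesis .
qed

lemma minus_in_cube: "j \<in> Zn \<Longrightarrow> v - j \<in> cube \<longleftrightarrow> j = vfloor v"
  using plus_in_cube[of "-j" v] Zn_minus[of j] by auto

lemma count_plus: "(\<integral>\<^sup>+ j. indicator cube (v + j) \<partial>count_space Zn) = 1"
proof -
  have "(\<integral>\<^sup>+ j. indicator cube (v + j) \<partial>count_space Zn)
      = (\<integral>\<^sup>+ j. indicator {- vfloor v} j \<partial>count_space Zn)"
    by (intro nn_integral_cong) (auto simp: plus_in_cube indicator_def)
  also have "\<dots> = 1" using Zn_minus[OF vfloor_Zn[of v]]
    by (subst nn_integral_indicator) auto
  finally show ?thesis .
qed

lemma count_minus: "(\<integral>\<^sup>+ j. indicator cube (v - j) \<partial>count_space Zn) = 1"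
proof -
  have "(\<integral>\<^sup>+ j. indicator cube (v - j) \<partial>count_space Zn)
      = (\<integral>\<^sup>+ j. indicator {vfloor v} j \<partial>count_space Zn)"
    by (intro nn_integral_cong) (auto simp: minus_in_cube indicator_def)
  also have "\<dots> = 1" using vfloor_Zn[of v]
    by (subst nn_integral_indicator) auto
  finally show ?thesis .
qed

lemma nn_transl:
  fixes f :: "real^'n \<Rightarrow> ennreal"
  assumes [measurable]: "f \<in> borel_measurable borel"
  shows "(\<integral>\<^sup>+ x. f (x + c) \<partial>lborel) = (\<integral>\<^sup>+ x. f x \<partial>lborel)"
proof -
  have "(\<integral>\<^sup>+ x. f x \<partial>lborel) = (\<integral>\<^sup>+ x. f x \<partial>distr lborel borel ((+) c))"
    by (simp add: lborel_distr_plus)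
  also have "\<dots> = (\<integral>\<^sup>+ x. f (c + x) \<partial>lborel)"
    by (subst nn_integral_distr) auto
  finally show ?thesis by (simp add: add.commute)
qed

lemma nn_scale:
  fixes G :: "real^'n \<Rightarrow> ennreal" and c :: real
  assumes [measurable]: "G \<in> borel_measurable borel" and c: "c \<noteq> 0"
  shows "ennreal (\<bar>c\<bar> ^ CARD('n)) * (\<integral>\<^sup>+ x. G (c *\<^sub>R x) \<partial>lborel) = (\<integral>\<^sup>+ x. G x \<partial>lborel)"
proof -
  have "(\<integral>\<^sup>+ x. G x \<partial>lborel) = (\<integral>\<^sup>+ x. G x \<partial>density (distr lborel borel (\<lambda>x. 0 + c *\<^sub>R x))
         (\<lambda>x. ennreal (\<bar>c\<bar> ^ DIM(real^'n))))"
    using lborel_affine[where 'a="real^'n", OF c, of 0] by simp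
  also have "\<dots> = (\<integral>\<^sup>+ x. ennreal (\<bar>c\<bar> ^ CARD('n)) * G x \<partial>distr lborel borel (\<lambda>x. 0 + c *\<^sub>R x))"
    by (subst nn_integral_density) auto
  also have "\<dots> = (\<integral>\<^sup>+ x. ennreal (\<bar>c\<bar> ^ CARD('n)) * G (c *\<^sub>R x) \<partial>lborel)"
    by (subst nn_integral_distr) auto
  also have "\<dots> = ennreal (\<bar>c\<bar> ^ CARD('n)) * (\<integral>\<^sup>+ x. G (c *\<^sub>R x) \<partial>lborel)"
    by (subst nn_integral_cmult) auto
  finally show ?thesis ..
qed

lemma unfold_per:
  fixes f \<psi> :: "real^'n \<Rightarrow> ennreal"
  assumes [measurable]: "f \<in> borel_measurable borel" "\<psi> \<in> borel_measurable borel"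
    and per: "\<And>u j. j \<in> Zn \<Longrightarrow> f (u + j) = f u"
  shows "(\<integral>\<^sup>+ u. f u * \<psi> u \<partial>lborel)
       = (\<integral>\<^sup>+ w. f w * indicator cube w * (\<integral>\<^sup>+ j. \<psi> (w - j) \<partial>count_space Zn) \<partial>lborel)"
proof -
  have "(\<integral>\<^sup>+ u. f u * \<psi> u \<partial>lborel)
      = (\<integral>\<^sup>+ u. (\<integral>\<^sup>+ j. f u * \<psi> u * indicator cube (u + j) \<partial>count_space Zn) \<partial>lborel)"
    by (intro nn_integral_cong) (simp add: nn_integral_cmult count_plus)
  also have "\<dots> = (\<integral>\<^sup>+ j. (\<integral>\<^sup>+ u. f u * \<psi> u * indicator cube (u + j) \<partial>lborel) \<partial>count_space Zn)"
    by (rule nn_integral_count_space_nn_integral[OF countable_Zn]) simp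
  also have "\<dots> = (\<integral>\<^sup>+ j. (\<integral>\<^sup>+ w. f w * \<psi> (w - j) * indicator cube w \<partial>lborel) \<partial>count_space Zn)"
  proof (rule nn_integral_cong)
    fix j assume "j \<in> space (count_space (Zn::(real^'n) set))"
    then have j: "j \<in> Zn" by simp
    have "(\<integral>\<^sup>+ u. f u * \<psi> u * indicator cube (u + j) \<partial>lborel)
        = (\<integral>\<^sup>+ w. f (w + - j) * \<psi> (w + - j) * indicator cube (w + - j + j) \<partial>lborel)"
      by (rule nn_transl[symmetric]) simp
    also have "\<dots> = (\<integral>\<^sup>+ w. f w * \<psi> (w - j) * indicator cube w \<partial>lborel)"
      using per[OF Zn_minus[OF j]] by simp
    finally show "(\<integral>\<^sup>+ u. f u * \<psi> u * indicator cube (u + j) \<partial>lborel)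
        = (\<integral>\<^sup>+ w. f w * \<psi> (w - j) * indicator cube w \<partial>lborel)" .
  qed
  also have "\<dots> = (\<integral>\<^sup>+ w. (\<integral>\<^sup>+ j. f w * \<psi> (w - j) * indicator cube w \<partial>count_space Zn) \<partial>lborel)"
    by (rule nn_integral_count_space_nn_integral[OF countable_Zn, symmetric]) simp
  also have "\<dots> = (\<integral>\<^sup>+ w. f w * indicator cube w * (\<integral>\<^sup>+ j. \<psi> (w - j) \<partial>count_space Zn) \<partial>lborel)"
  proof (intro nn_integral_cong)
    fix w
    have "(\<integral>\<^sup>+ j. f w * \<psi> (w - j) * indicator cube w \<partial>count_space Zn)
        = (\<integral>\<^sup>+ j. (f w * indicator cube w) * \<psi> (w - j) \<partial>count_space Zn)"
      by (simp add: mult_ac)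
    also have "\<dots> = f w * indicator cube w * (\<integral>\<^sup>+ j. \<psi> (w - j) \<partial>count_space Zn)"
      by (rule nn_integral_cmult) simp
    finally show "(\<integral>\<^sup>+ j. f w * \<psi> (w - j) * indicator cube w \<partial>count_space Zn)
        = f w * indicator cube w * (\<integral>\<^sup>+ j. \<psi> (w - j) \<partial>count_space Zn)" .
  qed
  finally show ?thesis .
qed

lemma per_transl:
  fixes f :: "real^'n \<Rightarrow> ennreal"
  assumes [measurable]: "f \<in> borel_measurable borel"
    and per: "\<And>u j. j \<in> Zn \<Longrightarrow> f (u + j) = f u"
  shows "(\<integral>\<^sup>+ x. f (x + c) * indicator cube x \<partial>lborel) = (\<integral>\<^sup>+ x. f x * indicator cube x \<partial>lborel)"
proof -
  have "(\<integral>\<^sup>+ x. f (x + c) * indicator cube x \<partial>lborel)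
      = (\<integral>\<^sup>+ x. f (x + c) * indicator cube (x + c - c) \<partial>lborel)" by simp
  also have "\<dots> = (\<integral>\<^sup>+ u. f u * indicator cube (u - c) \<partial>lborel)"
    by (rule nn_transl[where f="\<lambda>u. f u * indicator cube (u - c)"]) simp
  also have "\<dots> = (\<integral>\<^sup>+ w. f w * indicator cube w * (\<integral>\<^sup>+ j. indicator cube (w - j - c) \<partial>count_space Zn) \<partial>lborel)"
    by (rule unfold_per) (auto simp: per)
  also have "\<dots> = (\<integral>\<^sup>+ x. f x * indicator cube x \<partial>lborel)"
  proof (intro nn_integral_cong)
    fix w
    have "(\<integral>\<^sup>+ j. indicator cube (w - j - c) \<partial>count_space Zn) = 1"
      using count_minus[of "w - c"] by (simp add: algebra_simps)
    then show "f w * indicator cube w * (\<integral>\<^sup>+ j. indicator cube (w - j - c) \<partial>count_space Zn)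
        = f w * indicator cube w" by simp
  qed
  finally show ?thesis .
qed

lemma coord_k:
  fixes t :: int and w :: real and k :: nat
  assumes "0 \<le> w" "w < 1" "0 < k"
  shows "(0 \<le> w - of_int t \<and> w - of_int t < real k) \<longleftrightarrow> (1 - int k \<le> t \<and> t \<le> 0)"
proof
  assume a: "0 \<le> w - of_int t \<and> w - of_int t < real k"
  then have "real_of_int t < 1" using assms by linarith
  then have "t \<le> 0" by linarith
  moreover have "real_of_int (- int k) < of_int t" using a assms by simp
  then have "- int k < t" by (simp only: of_int_less_iff)
  ultimately show "1 - int k \<le> t \<and> t \<le> 0" by linarith
next
  assume a: "1 - int k \<le> t \<and> t \<le> 0"
  then have "real_of_int (1 - int k) \<le> of_int t" "real_of_int t \<le> 0" by (simp_all only: of_int_le_iff) simp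
  then show "0 \<le> w - of_int t \<and> w - of_int t < real k" using assms by simp
qed

definition Jk :: "nat \<Rightarrow> (real^'n) set" where
  "Jk k = {j. \<forall>i. 1 - real k \<le> j $ i \<and> j $ i \<le> 0}"

lemma scale_in_cube:
  assumes w: "w \<in> cube" and j: "j \<in> Zn" and k: "0 < k"
  shows "(1 / real k) *\<^sub>R (w - j) \<in> cube \<longleftrightarrow> j \<in> Jk k"
proof -
  have "0 \<le> (w $ i - j $ i) / real k \<and> (w $ i - j $ i) / real k < 1 \<longleftrightarrow>
        1 - real k \<le> j $ i \<and> j $ i \<le> 0" for i
  proof -
    obtain t where t: "j $ i = of_int t" using j by (auto simp: Zn_def elim: Ints_cases)
    have "0 \<le> (w $ i - j $ i) / real k \<and> (w $ i - j $ i) / real k < 1 \<longleftrightarrow>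
          0 \<le> w $ i - of_int t \<and> w $ i - of_int t < real k"
      using k by (simp add: t divide_simps)
    also have "\<dots> \<longleftrightarrow> 1 - int k \<le> t \<and> t \<le> 0"
      using w k by (intro coord_k) (auto simp: cube_def)
    also have "\<dots> \<longleftrightarrow> 1 - real k \<le> j $ i \<and> j $ i \<le> 0"
      unfolding t by (metis of_int_le_iff of_int_0_le_iff of_int_diff of_int_1 of_int_of_nat_eq
          of_int_le_0_iff)
    finally show ?thesis .
  qed
  then show ?thesis by (auto simp: cube_def Jk_def)
qed

lemma per_scale:
  fixes f :: "real^'n \<Rightarrow> ennreal" and k :: nat
  assumes [measurable]: "f \<in> borel_measurable borel"
    and per: "\<And>u j. j \<in> Zn \<Longrightarrow> f (u + j) = f u" and k: "0 < k"
  shows "(\<integral>\<^sup>+ x. f (real k *\<^sub>R x) * indicator cube x \<partial>lborel) = (\<integral>\<^sup>+ x. f x * indicator cube x \<partial>lborel)"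
proof -
  define Ck where "Ck = (\<integral>\<^sup>+ j. indicator (Jk k) j \<partial>count_space (Zn :: (real^'n) set))"
  have gen: "ennreal (real k ^ CARD('n)) * (\<integral>\<^sup>+ x. g (real k *\<^sub>R x) * indicator cube x \<partial>lborel)
           = Ck * (\<integral>\<^sup>+ x. g x * indicator cube x \<partial>lborel)"
    if gm[measurable]: "g \<in> borel_measurable borel" and gp: "\<And>u j. j \<in> Zn \<Longrightarrow> g (u + j) = g u"
    for g :: "real^'n \<Rightarrow> ennreal"
  proof -
    have "ennreal (real k ^ CARD('n)) * (\<integral>\<^sup>+ x. g (real k *\<^sub>R x) * indicator cube x \<partial>lborel)
        = ennreal (\<bar>real k\<bar> ^ CARD('n)) * (\<integral>\<^sup>+ x. g (real k *\<^sub>R x) *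
             indicator cube ((1 / real k) *\<^sub>R (real k *\<^sub>R x)) \<partial>lborel)"
      using k by simp
    also have "\<dots> = (\<integral>\<^sup>+ u. g u * indicator cube ((1 / real k) *\<^sub>R u) \<partial>lborel)"
      by (rule nn_scale[where G="\<lambda>u. g u * indicator cube ((1 / real k) *\<^sub>R u)"]) (use k in auto)
    also have "\<dots> = (\<integral>\<^sup>+ w. g w * indicator cube w *
        (\<integral>\<^sup>+ j. indicator cube ((1 / real k) *\<^sub>R (w - j)) \<partial>count_space Zn) \<partial>lborel)"
      by (rule unfold_per) (auto simp: gp)
    also have "\<dots> = (\<integral>\<^sup>+ w. Ck * (g w * indicator cube w) \<partial>lborel)"
    proof (intro nn_integral_cong)
      fix w :: "real^'n"
      show "g w * indicator cube w *
        (\<integral>\<^sup>+ j. indicator cube ((1 / real k) *\<^sub>R (w - j)) \<partial>count_space Zn) = Ck * (g w * indicator cube w)"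
      proof (cases "w \<in> cube")
        case True
        have "(\<integral>\<^sup>+ j. indicator cube ((1 / real k) *\<^sub>R (w - j)) \<partial>count_space Zn) = Ck"
          unfolding Ck_def
          by (intro nn_integral_cong) (auto simp: indicator_def scale_in_cube[OF True _ k])
        then show ?thesis by (simp add: mult_ac)
      qed simp
    qed
    also have "\<dots> = Ck * (\<integral>\<^sup>+ x. g x * indicator cube x \<partial>lborel)"
      by (rule nn_integral_cmult) simp
    finally show ?thesis .
  qed
  have one: "ennreal (real k ^ CARD('n)) = Ck"
    using gen[of "\<lambda>_. 1"] by (simp add: nn_integral_indicator emeasure_cube)
  have "ennreal (real k ^ CARD('n)) * (\<integral>\<^sup>+ x. f (real k *\<^sub>R x) * indicator cube x \<partial>lborel)
      = ennreal (real k ^ CARD('n)) * (\<integral>\<^sup>+ x. f x * indicator cube x \<partial>lborel)"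
    using gen[of f] per one by simp
  then show ?thesis using k by (simp add: ennreal_mult_cancel_left)
qed

lemma AE_periodic:
  fixes Q :: "real^'n \<Rightarrow> bool"
  assumes per: "\<And>x j. j \<in> Zn \<Longrightarrow> Q (x + j) = Q x"
    and ae: "AE x in lborel. x \<in> cube \<longrightarrow> Q x"
  shows "AE x in lborel. Q x"
proof -
  obtain B where B: "{x \<in> space lborel. \<not> (x \<in> cube \<longrightarrow> Q x)} \<subseteq> B" "emeasure lborel B = 0" "B \<in> sets lborel"
    using ae by (rule AE_E)
  have Bb[measurable]: "B \<in> sets borel" using B(3) by simp
  have "AE x in lborel. x - j \<notin> B" if j: "j \<in> Zn" for j
  proof -
    have s: "{x::real^'n. x - j \<in> B} \<in> sets lborel"
    proof -
      have "{x::real^'n. x - j \<in> B} = (\<lambda>x. x - j) -` B \<inter> space lborel" by auto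
      also have "\<dots> \<in> sets lborel" by (rule measurable_sets[OF _ B(3)]) measurable
      finally show ?thesis .
    qed
    have "emeasure lborel {x::real^'n. x - j \<in> B} = (\<integral>\<^sup>+ x. indicator {x::real^'n. x - j \<in> B} x \<partial>lborel)"
      using s by simp
    also have "\<dots> = (\<integral>\<^sup>+ x. indicator B (x + - j) \<partial>lborel)"
      by (rule nn_integral_cong) (simp add: indicator_def)
    also have "\<dots> = (\<integral>\<^sup>+ x. indicator B x \<partial>lborel)" by (rule nn_transl) simp
    also have "\<dots> = 0" using B by simp
    finally have "{x::real^'n. x - j \<in> B} \<in> null_sets lborel" using s by (simp add: null_sets_def)
    from AE_not_in[OF this] show ?thesis by simp
  qed
  then have "AE x in lborel. \<forall>j\<in>Zn. x - j \<notin> B"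
    by (subst AE_ball_countable[OF countable_Zn]) auto
  then show ?thesis
  proof (rule AE_mp[OF _ AE_I2], intro impI)
    fix x :: "real^'n" assume a: "\<forall>j\<in>Zn. x - j \<notin> B"
    have c: "x - vfloor x \<in> cube" using minus_in_cube[OF vfloor_Zn[of x], of x] by simp
    have "x - vfloor x \<notin> B" using a vfloor_Zn by auto
    then have "Q (x - vfloor x)" using B(1) c by auto
    then show "Q x" using per[OF vfloor_Zn, of "x - vfloor x" x] by simp
  qed
qed


definition UU :: "(real^'n \<Rightarrow> real) \<Rightarrow> real \<Rightarrow> (real^'n) set" where
  "UU N \<rho> = {u. \<exists>j\<in>Zn. N (u - j) < \<rho>}"

definition GG :: "(real^'n \<Rightarrow> real) \<Rightarrow> (nat \<Rightarrow> real) \<Rightarrow> nat \<Rightarrow> ((real^'n) \<times> (real^'n)) set" where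
  "GG N r n = {z. snd z - of_nat n *\<^sub>R fst z \<in> UU N (r n)}"

definition pp :: "(real^'n \<Rightarrow> real) \<Rightarrow> real \<Rightarrow> ennreal" where
  "pp N \<rho> = (\<integral>\<^sup>+ x. indicator (UU N \<rho>) x * indicator cube x \<partial>lborel)"

definition PP :: "((real^'n) \<times> (real^'n)) measure" where
  "PP = density (lborel \<Otimes>\<^sub>M lborel) (indicator (cube \<times> cube))"

context
  fixes N :: "real ^ 'n \<Rightarrow> real"
  assumes nN: "is_norm N"
begin

lemma UU_open: "open (UU N \<rho>)"
proof -
  have "UU N \<rho> = (\<Union>j\<in>Zn. {u. N (u - j) < \<rho>})" by (auto simp: UU_def)
  also have "open \<dots>"
  proof (intro open_UN ballI)
    fix j :: "real^'n"
    have "continuous_on UNIV (\<lambda>u. N (u - j))"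
      by (intro continuous_on_compose2[OF N_cont[OF nN, of UNIV]] continuous_intros) auto
    then show "open {u. N (u - j) < \<rho>}"
      by (intro open_Collect_less) (auto intro: continuous_intros)
  qed
  finally show ?thesis .
qed

lemma UU_borel[measurable]: "UU N \<rho> \<in> sets borel"
  using UU_open by (rule borel_open)

lemma UU_per: "j \<in> Zn \<Longrightarrow> u + j \<in> UU N \<rho> \<longleftrightarrow> u \<in> UU N \<rho>"
proof
  assume j: "j \<in> Zn" and "u + j \<in> UU N \<rho>"
  then obtain j' where "j' \<in> Zn" "N (u + j - j') < \<rho>" by (auto simp: UU_def)
  then show "u \<in> UU N \<rho>" using Zn_diff[OF \<open>j' \<in> Zn\<close> j] unfolding UU_def
    by (intro CollectI bexI[of _ "j' - j"]) (auto simp: algebra_simps)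
next
  assume j: "j \<in> Zn" and "u \<in> UU N \<rho>"
  then obtain j' where "j' \<in> Zn" "N (u - j') < \<rho>" by (auto simp: UU_def)
  then show "u + j \<in> UU N \<rho>" using Zn_add[OF \<open>j' \<in> Zn\<close> j] unfolding UU_def
    by (intro CollectI bexI[of _ "j' + j"]) (auto simp: algebra_simps)
qed

lemma ind_UU_per: "j \<in> Zn \<Longrightarrow> indicator (UU N \<rho>) (u + j) = (indicator (UU N \<rho>) u :: ennreal)"
  using UU_per by (simp add: indicator_def)

lemma GG_sets[measurable]: "GG N r n \<in> sets (lborel \<Otimes>\<^sub>M lborel)"
proof -
  have h: "(\<lambda>z::(real^'n) \<times> (real^'n). snd z - of_nat n *\<^sub>R fst z) \<in> borel_measurable (lborel \<Otimes>\<^sub>M lborel)"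
    by measurable
  have "GG N r n = (\<lambda>z::(real^'n) \<times> (real^'n). snd z - of_nat n *\<^sub>R fst z) -` UU N (r n) \<inter> space (lborel \<Otimes>\<^sub>M lborel)"
    by (auto simp: GG_def space_pair_measure)
  also have "\<dots> \<in> sets (lborel \<Otimes>\<^sub>M lborel)" by (rule measurable_sets[OF h UU_borel])
  finally show ?thesis .
qed

lemma emeasure_PP:
  assumes [measurable]: "A \<in> sets (lborel \<Otimes>\<^sub>M lborel)"
  shows "emeasure PP A = (\<integral>\<^sup>+ x. \<integral>\<^sup>+ y. indicator cube x * indicator cube y * indicator A (x, y) \<partial>lborel \<partial>lborel)"
proof -
  have "emeasure PP A = (\<integral>\<^sup>+ z. indicator (cube \<times> cube) z * indicator A z \<partial>(lborel \<Otimes>\<^sub>M lborel))"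
  proof -
    have "A \<in> sets (borel \<Otimes>\<^sub>M borel)"
      using assms sets_pair_measure_cong[OF sets_lborel sets_lborel] by simp
    then show ?thesis unfolding PP_def by (subst emeasure_density) auto
  qed
  also have "\<dots> = (\<integral>\<^sup>+ x. \<integral>\<^sup>+ y. indicator (cube \<times> cube) (x, y) * indicator A (x, y) \<partial>lborel \<partial>lborel)"
    by (rule lborel.nn_integral_fst[symmetric]) measurable
  also have "\<dots> = (\<integral>\<^sup>+ x. \<integral>\<^sup>+ y. indicator cube x * indicator cube y * indicator A (x, y) \<partial>lborel \<partial>lborel)"
    by (simp add: indicator_times)
  finally show ?thesis .
qed

lemma pp_le1: "pp N \<rho> \<le> 1"
proof -
  have "pp N \<rho> \<le> (\<integral>\<^sup>+ x. indicator (cube :: (real^'n) set) x \<partial>lborel)"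
    unfolding pp_def by (rule nn_integral_mono) (auto simp: indicator_def)
  also have "\<dots> = 1" by (simp add: emeasure_cube)
  finally show ?thesis .
qed

lemma emeasure_GG: "emeasure PP (GG N r n) = pp N (r n)"
proof -
  have "emeasure PP (GG N r n) = (\<integral>\<^sup>+ x. \<integral>\<^sup>+ y. indicator cube x * indicator cube y * indicator (GG N r n) (x, y) \<partial>lborel \<partial>lborel)"
    by (rule emeasure_PP) (rule GG_sets)
  also have "\<dots> = (\<integral>\<^sup>+ x. indicator (cube :: (real^'n) set) x * pp N (r n) \<partial>lborel)"
  proof (rule nn_integral_cong)
    fix x :: "real^'n"
    have "(\<integral>\<^sup>+ y. indicator cube x * indicator cube y * indicator (GG N r n) (x, y) \<partial>lborel)
        = indicator cube x * (\<integral>\<^sup>+ y. indicator (UU N (r n)) (y + - (of_nat n *\<^sub>R x)) * indicator cube y \<partial>lborel)"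
      by (subst nn_integral_cmult[symmetric]) (auto simp: GG_def indicator_def intro!: nn_integral_cong)
    also have "\<dots> = indicator cube x * pp N (r n)"
      unfolding pp_def by (subst per_transl) (auto simp: ind_UU_per)
    finally show "(\<integral>\<^sup>+ y. indicator cube x * indicator cube y * indicator (GG N r n) (x, y) \<partial>lborel)
        = indicator cube x * pp N (r n)" .
  qed
  also have "\<dots> = pp N (r n)"
    by (subst nn_integral_multc) (auto simp: emeasure_cube)
  finally show ?thesis .
qed

lemma emeasure_GG_Int_lt:
  assumes nm: "n < m"
  shows "emeasure PP (GG N r n \<inter> GG N r m) = pp N (r n) * pp N (r m)"
proof -
  define k where "k = m - n"
  have k: "0 < k" and mk: "of_nat m *\<^sub>R x - of_nat n *\<^sub>R x = of_nat k *\<^sub>R (x::real^'n)" for x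
    using nm by (auto simp: k_def of_nat_diff scaleR_diff_left)
  let ?Un = "indicator (UU N (r n)) :: real^'n \<Rightarrow> ennreal"
  let ?Um = "indicator (UU N (r m)) :: real^'n \<Rightarrow> ennreal"
  let ?C = "indicator (cube :: (real^'n) set) :: real^'n \<Rightarrow> ennreal"
  have "emeasure PP (GG N r n \<inter> GG N r m) = (\<integral>\<^sup>+ x. \<integral>\<^sup>+ y. ?C x * ?C y * indicator (GG N r n \<inter> GG N r m) (x, y) \<partial>lborel \<partial>lborel)"
    by (rule emeasure_PP) (intro sets.Int GG_sets)
  also have "\<dots> = (\<integral>\<^sup>+ x. \<integral>\<^sup>+ y. ?C x * ?Un (y + of_nat k *\<^sub>R x) * ?Um y * ?C y \<partial>lborel \<partial>lborel)"
  proof (rule nn_integral_cong)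
    fix x :: "real^'n"
    let ?F = "\<lambda>y. ?Un (y - of_nat n *\<^sub>R x) * ?Um (y - of_nat m *\<^sub>R x)"
    have "(\<integral>\<^sup>+ y. ?C x * ?C y * indicator (GG N r n \<inter> GG N r m) (x, y) \<partial>lborel)
        = ?C x * (\<integral>\<^sup>+ y. ?F y * ?C y \<partial>lborel)"
      by (subst nn_integral_cmult[symmetric]) (auto simp: GG_def indicator_def intro!: nn_integral_cong)
    also have "(\<integral>\<^sup>+ y. ?F y * ?C y \<partial>lborel) = (\<integral>\<^sup>+ y. ?F (y + of_nat m *\<^sub>R x) * ?C y \<partial>lborel)"
    proof (rule per_transl[symmetric])
      fix u j :: "real^'n" assume j: "j \<in> Zn"
      have "?Un (u + j - of_nat n *\<^sub>R x) = ?Un (u - of_nat n *\<^sub>R x)"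
        using ind_UU_per[OF j, of "r n" "u - of_nat n *\<^sub>R x"] unfolding diff_add_eq .
      moreover have "?Um (u + j - of_nat m *\<^sub>R x) = ?Um (u - of_nat m *\<^sub>R x)"
        using ind_UU_per[OF j, of "r m" "u - of_nat m *\<^sub>R x"] unfolding diff_add_eq .
      ultimately show "?F (u + j) = ?F u" by simp
    qed simp
    also have "\<dots> = (\<integral>\<^sup>+ y. ?Un (y + of_nat k *\<^sub>R x) * ?Um y * ?C y \<partial>lborel)"
    proof (rule nn_integral_cong)
      fix y :: "real^'n"
      have "y + of_nat m *\<^sub>R x - of_nat n *\<^sub>R x = y + of_nat k *\<^sub>R x" using mk[of x] by (simp add: add_diff_eq[symmetric])
      then show "?F (y + of_nat m *\<^sub>R x) * ?C y = ?Un (y + of_nat k *\<^sub>R x) * ?Um y * ?C y" by (simp only: add_diff_cancel_right')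
    qed
    also have "?C x * (\<integral>\<^sup>+ y. ?Un (y + of_nat k *\<^sub>R x) * ?Um y * ?C y \<partial>lborel)
        = (\<integral>\<^sup>+ y. ?C x * ?Un (y + of_nat k *\<^sub>R x) * ?Um y * ?C y \<partial>lborel)"
      by (subst nn_integral_cmult[symmetric]) (auto simp: mult_ac intro!: nn_integral_cong)
    finally show "(\<integral>\<^sup>+ y. ?C x * ?C y * indicator (GG N r n \<inter> GG N r m) (x, y) \<partial>lborel)
        = (\<integral>\<^sup>+ y. ?C x * ?Un (y + of_nat k *\<^sub>R x) * ?Um y * ?C y \<partial>lborel)" .
  qed
  also have "\<dots> = (\<integral>\<^sup>+ y. \<integral>\<^sup>+ x. ?C x * ?Un (y + of_nat k *\<^sub>R x) * ?Um y * ?C y \<partial>lborel \<partial>lborel)"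
    by (rule lborel_pair.Fubini'[symmetric]) measurable
  also have "\<dots> = (\<integral>\<^sup>+ y. ?Um y * ?C y * pp N (r n) \<partial>lborel)"
  proof (rule nn_integral_cong)
    fix y :: "real^'n"
    have "(\<integral>\<^sup>+ x. ?C x * ?Un (y + of_nat k *\<^sub>R x) * ?Um y * ?C y \<partial>lborel)
        = ?Um y * ?C y * (\<integral>\<^sup>+ x. ?Un (y + of_nat k *\<^sub>R x) * ?C x \<partial>lborel)"
      by (subst nn_integral_cmult[symmetric]) (auto simp: mult_ac)
    also have "(\<integral>\<^sup>+ x. ?Un (y + of_nat k *\<^sub>R x) * ?C x \<partial>lborel) = (\<integral>\<^sup>+ x. ?Un (y + x) * ?C x \<partial>lborel)"
      by (rule per_scale[where f="\<lambda>u. ?Un (y + u)", OF _ _ k])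
         (auto simp: add.assoc[symmetric] ind_UU_per)
    also have "\<dots> = (\<integral>\<^sup>+ x. ?Un (x + y) * ?C x \<partial>lborel)" by (simp add: add.commute)
    also have "\<dots> = pp N (r n)" unfolding pp_def
      by (rule per_transl) (auto simp: ind_UU_per)
    finally show "(\<integral>\<^sup>+ x. ?C x * ?Un (y + of_nat k *\<^sub>R x) * ?Um y * ?C y \<partial>lborel) = ?Um y * ?C y * pp N (r n)" .
  qed
  also have "\<dots> = pp N (r m) * pp N (r n)"
    unfolding pp_def by (rule nn_integral_multc) simp
  finally show ?thesis by (simp add: mult.commute)
qed

lemma emeasure_GG_Int:
  assumes "n \<noteq> m"
  shows "emeasure PP (GG N r n \<inter> GG N r m) = pp N (r n) * pp N (r m)"
proof (cases "n < m")
  case True then show ?thesis by (rule emeasure_GG_Int_lt)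
next
  case False
  then have "m < n" using assms by simp
  then show ?thesis using emeasure_GG_Int_lt[of m n] by (simp add: Int_commute mult.commute)
qed

lemma PP_prob: "prob_space (PP :: ((real^'n) \<times> (real^'n)) measure)"
proof
  have "emeasure (PP :: ((real^'n) \<times> (real^'n)) measure) (space PP) = emeasure PP (space (lborel \<Otimes>\<^sub>M lborel) :: ((real^'n) \<times> (real^'n)) set)" by (simp add: PP_def)
  also have "\<dots> = (\<integral>\<^sup>+ x. \<integral>\<^sup>+ y. indicator cube x * indicator cube y * indicator (space (lborel \<Otimes>\<^sub>M lborel)) (x::real^'n, y::real^'n) \<partial>lborel \<partial>lborel)"
    by (rule emeasure_PP) (rule sets.top)
  also have "\<dots> = (\<integral>\<^sup>+ x. indicator (cube :: (real^'n) set) x * 1 \<partial>lborel)"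
    by (intro nn_integral_cong) (simp add: nn_integral_cmult emeasure_cube space_pair_measure)
  also have "\<dots> = 1" by (simp add: emeasure_cube)
  finally show "emeasure (PP :: ((real^'n) \<times> (real^'n)) measure) (space PP) = 1" .
qed

lemma pp_lower:
  assumes r0: "0 \<le> \<rho>" and r1: "\<rho> \<le> Cl N / 2"
  shows "ennreal (unit_ball_vol (real CARD('n)) * (\<rho> / Cu N) ^ CARD('n)) \<le> pp N \<rho>"
proof -
  define h :: "real^'n" where "h = (\<chi> i. 1 / 2)"
  have Cu: "0 < Cu N" using Cu_pos[OF nN] .
  have Cl: "0 < Cl N" using Cl(1)[OF nN] .
  have "ennreal (unit_ball_vol (real CARD('n)) * (\<rho> / Cu N) ^ CARD('n)) = emeasure lborel (ball h (\<rho> / Cu N))"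
    using r0 Cu by (subst emeasure_ball) auto
  also have "\<dots> = (\<integral>\<^sup>+ x. indicator (ball h (\<rho> / Cu N)) x \<partial>lborel)" by simp
  also have "\<dots> \<le> (\<integral>\<^sup>+ x. indicator (UU N \<rho>) (x + - h) * indicator cube x \<partial>lborel)"
  proof (rule nn_integral_mono)
    fix x :: "real^'n"
    show "indicator (ball h (\<rho> / Cu N)) x \<le> (indicator (UU N \<rho>) (x + - h) * indicator cube x :: ennreal)"
    proof (cases "x \<in> ball h (\<rho> / Cu N)")
      case True
      then have nx: "norm (x - h) < \<rho> / Cu N" by (simp add: dist_norm norm_minus_commute)
      have Nx: "N (x - h) < \<rho>"
        using N_upper[OF nN, of "x - h"] nx Cu by (simp add: field_simps) 
      have "x + - h \<in> UU N \<rho>" unfolding UU_def using Nx Zn_0 by (intro CollectI bexI[of _ 0]) auto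
      moreover have "x \<in> cube"
      proof -
        have "0 \<le> x $ i \<and> x $ i < 1" for i
        proof -
          have "Cl N * \<bar>(x - h) $ i\<bar> < \<rho>" using N_comp[OF nN, of "x - h" i] Nx by linarith
          then have "Cl N * \<bar>(x - h) $ i\<bar> < Cl N * (1/2)" using r1 by linarith
          then have "\<bar>(x - h) $ i\<bar> < 1/2" using Cl by (simp only: mult_less_cancel_left_pos)
          then show ?thesis by (simp add: h_def abs_if split: if_splits)
        qed
        then show ?thesis by (simp add: cube_def)
      qed
      ultimately show ?thesis by (simp add: indicator_def)
    qed simp
  qed
  also have "\<dots> = pp N \<rho>" unfolding pp_def by (rule per_transl) (auto simp: ind_UU_per)
  finally show ?thesis .
qed

lemma vfrac_close:
  assumes j: "j \<in> Zn" and Nv: "N (y - a - j) < \<rho>" and rd: "\<rho> \<le> Cl N * \<delta>"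
    and yd: "\<And>i. \<delta> \<le> y $ i \<and> y $ i \<le> 1 - \<delta>"
  shows "N (y - vfrac a) < \<rho>"
proof -
  have Cl: "0 < Cl N" using Cl(1)[OF nN] .
  have "vfrac a = a + j"
  proof -
    have "frac (a $ i) = a $ i + j $ i" for i
    proof -
      have "Cl N * \<bar>(y - a - j) $ i\<bar> < Cl N * \<delta>" using N_comp[OF nN, of "y - a - j" i] Nv rd by linarith
      then have v: "\<bar>y $ i - a $ i - j $ i\<bar> < \<delta>" using Cl by (simp only: mult_less_cancel_left_pos) simp
      obtain t where t: "j $ i = of_int t" using j by (auto simp: Zn_def elim: Ints_cases)
      have v1: "- \<delta> < y $ i - a $ i - j $ i" "y $ i - a $ i - j $ i < \<delta>" using v unfolding abs_less_iff by auto
      have w: "0 \<le> a $ i + of_int t" "a $ i + of_int t < 1" using v1 yd[of i] unfolding t by linarith+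
      have "\<lfloor>a $ i\<rfloor> = - t" unfolding floor_eq_iff using w by simp
      then show ?thesis by (simp add: frac_def t)
    qed
    then show ?thesis by (simp add: vfrac_def vec_eq_iff)
  qed
  then show ?thesis using Nv by (simp add: algebra_simps)
qed

lemma pointwise:
  assumes r0: "r \<longlonglongrightarrow> 0" and y: "y \<in> open_cube"
    and inf: "\<exists>\<^sub>\<infinity>n. (x, y) \<in> GG N r n"
  shows "\<exists>\<^sub>\<infinity>n. n \<ge> 1 \<and> N (y - vfrac (of_nat n *\<^sub>R x)) < r n"
proof -
  define \<delta> where "\<delta> = Min (range (\<lambda>i. min (y $ i) (1 - y $ i)))"
  have dpos: "0 < \<delta>" using y unfolding \<delta>_def open_cube_def by (subst Min_gr_iff) auto
  have yd: "\<delta> \<le> y $ i \<and> y $ i \<le> 1 - \<delta>" for i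
  proof -
    have "\<delta> \<le> min (y $ i) (1 - y $ i)" unfolding \<delta>_def by (rule Min_le) auto
    then show ?thesis by simp
  qed
  have ev: "eventually (\<lambda>n. r n < Cl N * \<delta>) sequentially"
    using r0 Cl(1)[OF nN] dpos by (intro order_tendstoD(2)) auto
  have ev1: "eventually (\<lambda>n. (1::nat) \<le> n) sequentially" by (rule eventually_ge_at_top)
  have "\<exists>\<^sub>F n in sequentially. (x, y) \<in> GG N r n"
    using inf by (simp add: cofinite_eq_sequentially)
  then have "\<exists>\<^sub>F n in sequentially. (x, y) \<in> GG N r n \<and> (r n < Cl N * \<delta> \<and> 1 \<le> n)"
    by (rule frequently_eventually_frequently) (rule eventually_conj[OF ev ev1])
  then have "\<exists>\<^sub>F n in sequentially. n \<ge> 1 \<and> N (y - vfrac (of_nat n *\<^sub>R x)) < r n"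
  proof (rule frequently_elim1)
    fix n assume a: "(x, y) \<in> GG N r n \<and> (r n < Cl N * \<delta> \<and> 1 \<le> n)"
    then obtain j where "j \<in> Zn" "N (y - of_nat n *\<^sub>R x - j) < r n" by (auto simp: GG_def UU_def)
    then have "N (y - vfrac (of_nat n *\<^sub>R x)) < r n"
      using a yd by (intro vfrac_close[where \<delta>=\<delta>]) auto
    then show "n \<ge> 1 \<and> N (y - vfrac (of_nat n *\<^sub>R x)) < r n" using a by simp
  qed
  then show ?thesis by (simp add: cofinite_eq_sequentially)
qed

end


theorem theorem11p1:
  fixes N :: "real ^ 'n \<Rightarrow> real" and r :: "nat \<Rightarrow> real"
  assumes "is_norm N"
    and "P_class CARD('n) r"
  shows "AE x in lebesgue.
           (AE y in lebesgue. y \<in> open_cube \<longrightarrow>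
              (\<exists>\<^sub>\<infinity>n. n \<ge> 1 \<and> N (y - vfrac (of_nat n *\<^sub>R x)) < r n))"
proof -
  note nN = assms(1)
  define D where "D = CARD('n)"
  have mono: "\<And>n. n \<ge> 1 \<Longrightarrow> r (Suc n) \<le> r n" and r0: "r \<longlonglongrightarrow> 0"
    and div: "\<not> summable (\<lambda>n. r (Suc n) ^ D)"
    using assms(2) by (auto simp: P_class_def D_def)
  have rnn: "0 \<le> r n" if "n \<ge> 1" for n
  proof -
    have "r m \<le> r n" if "m \<ge> n" for m
      using that
    proof (induction m rule: dec_induct)
      case (step m)
      then show ?case using mono[of m] \<open>n \<ge> 1\<close> by linarith
    qed simp
    then show ?thesis by (intro LIMSEQ_le_const2[OF r0]) auto
  qed
  let ?P = "PP :: ((real^'n) \<times> (real^'n)) measure"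
  interpret P: prob_space ?P by (rule PP_prob[OF nN])
  define q where "q n = measure ?P (GG N r n)" for n
  have q: "q n = enn2real (pp N (r n))" for n
    unfolding q_def measure_def using emeasure_GG[OF nN] by simp
  have sets: "GG N r n \<in> sets ?P" for n using GG_sets[OF nN, of r n] unfolding PP_def sets_density by blast
  have ind: "measure ?P (GG N r n \<inter> GG N r m) \<le> measure ?P (GG N r n) * measure ?P (GG N r m)"
    if "n \<noteq> m" for n m
    using emeasure_GG_Int[OF nN that, of r] emeasure_GG[OF nN]
    by (simp add: measure_def enn2real_mult)
  define \<kappa> where "\<kappa> = unit_ball_vol (real D) / Cu N ^ D"
  have kpos: "0 < \<kappa>" using Cu_pos[OF nN] unit_ball_vol_pos[of "real D"] by (simp add: \<kappa>_def)
  have evq: "eventually (\<lambda>n. norm (\<kappa> * r n ^ D) \<le> q n) sequentially"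
  proof -
    have "eventually (\<lambda>n. r n < Cl N / 2) sequentially"
      using r0 Cl(1)[OF nN] by (intro order_tendstoD(2)) auto
    moreover have "eventually (\<lambda>n. (1::nat) \<le> n) sequentially" by (rule eventually_ge_at_top)
    ultimately show ?thesis
    proof eventually_elim
      case (elim n)
      then have r: "0 \<le> r n" using rnn by auto
      have "ennreal (unit_ball_vol (real CARD('n)) * (r n / Cu N) ^ CARD('n)) \<le> pp N (r n)"
        using pp_lower[OF nN r] elim by simp
      then have "unit_ball_vol (real CARD('n)) * (r n / Cu N) ^ CARD('n) \<le> enn2real (pp N (r n))"
        using pp_le1[OF nN, of "r n"]
        by (metis enn2real_ennreal enn2real_mono ennreal_one_less_top le_less_trans unit_ball_vol_nonneg
            of_nat_0_le_iff mult_nonneg_nonneg zero_le_power divide_nonneg_nonneg r less_imp_le[OF Cu_pos[OF nN]])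
      moreover have "\<kappa> * r n ^ D = unit_ball_vol (real CARD('n)) * (r n / Cu N) ^ CARD('n)"
        by (simp add: \<kappa>_def D_def power_divide)
      moreover have "norm (\<kappa> * r n ^ D) = \<kappa> * r n ^ D" using kpos r by simp
      ultimately show ?case by (simp add: q)
    qed
  qed
  have "\<not> summable (\<lambda>n. measure ?P (GG N r n))"
  proof
    assume "summable (\<lambda>n. measure ?P (GG N r n))"
    then have "summable q" by (simp add: q_def[abs_def])
    then have "summable (\<lambda>n. \<kappa> * r n ^ D)" by (rule summable_comparison_test_ev[OF evq])
    then have "summable (\<lambda>n. r n ^ D)" using kpos by (simp add: summable_cmult_iff)
    then have "summable (\<lambda>n. r (Suc n) ^ D)" using summable_Suc_iff[of "\<lambda>n. r n ^ D"] by simp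
    with div show False by simp
  qed
  from pairwise_BC[OF PP_prob[OF nN] sets ind this]
  have "AE z in ?P. \<exists>\<^sub>\<infinity>n. z \<in> GG N r n" .
  then have "AE z in lborel \<Otimes>\<^sub>M lborel. 0 < (indicator (cube \<times> cube) z :: ennreal) \<longrightarrow> (\<exists>\<^sub>\<infinity>n. z \<in> GG N r n)"
    unfolding PP_def by (subst (asm) AE_density) auto
  then have "AE x in lborel. AE y in lborel. 0 < (indicator (cube \<times> cube) (x, y) :: ennreal) \<longrightarrow> (\<exists>\<^sub>\<infinity>n. (x, y) \<in> GG N r n)"
    by (rule lborel_pair.AE_pair)
  then have "AE x in lborel. x \<in> cube \<longrightarrow> (AE y in lborel. y \<in> cube \<longrightarrow> (\<exists>\<^sub>\<infinity>n. (x::real^'n, y) \<in> GG N r n))"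
    by (rule AE_mp[OF _ AE_I2]) (auto elim: AE_mp[OF _ AE_I2] simp: indicator_def)
  then have good: "AE x in lborel. (AE y in lborel. y \<in> cube \<longrightarrow> (\<exists>\<^sub>\<infinity>n. (x::real^'n, y) \<in> GG N r n))"
  proof (rule AE_periodic[rotated])
    fix x j :: "real^'n" assume j: "j \<in> Zn"
    have "(x + j, y) \<in> GG N r n \<longleftrightarrow> (x, y) \<in> GG N r n" for y n
    proof -
      have e: "y - of_nat n *\<^sub>R (x + j) = (y - of_nat n *\<^sub>R x) + - (of_nat n *\<^sub>R j)"
        by (simp add: algebra_simps)
      show ?thesis unfolding GG_def mem_Collect_eq fst_conv snd_conv e using UU_per[OF nN Zn_minus[OF Zn_scale[OF j]]] by simp
    qed
    then show "(AE y in lborel. y \<in> cube \<longrightarrow> (\<exists>\<^sub>\<infinity>n. (x + j, y) \<in> GG N r n)) =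
               (AE y in lborel. y \<in> cube \<longrightarrow> (\<exists>\<^sub>\<infinity>n. (x, y) \<in> GG N r n))" by simp
  qed
  have "AE x in lborel. (AE y in lborel. y \<in> open_cube \<longrightarrow>
              (\<exists>\<^sub>\<infinity>n. n \<ge> 1 \<and> N (y - vfrac (of_nat n *\<^sub>R x)) < r n))"
  proof (rule AE_mp[OF good AE_I2], intro impI)
    fix x :: "real^'n"
    assume "AE y in lborel. y \<in> cube \<longrightarrow> (\<exists>\<^sub>\<infinity>n. (x, y) \<in> GG N r n)"
    then show "AE y in lborel. y \<in> open_cube \<longrightarrow> (\<exists>\<^sub>\<infinity>n. n \<ge> 1 \<and> N (y - vfrac (of_nat n *\<^sub>R x)) < r n)"
    proof (rule AE_mp[OF _ AE_I2], intro impI)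
      fix y :: "real^'n"
      assume a: "y \<in> cube \<longrightarrow> (\<exists>\<^sub>\<infinity>n. (x, y) \<in> GG N r n)" and y: "y \<in> open_cube"
      have "y \<in> cube" using y by (auto simp: cube_def open_cube_def less_imp_le)
      with a have "\<exists>\<^sub>\<infinity>n. (x, y) \<in> GG N r n" by simp
      then show "\<exists>\<^sub>\<infinity>n. n \<ge> 1 \<and> N (y - vfrac (of_nat n *\<^sub>R x)) < r n"
        by (rule pointwise[OF nN r0 y])
    qed
  qed
  then show ?thesis
    by (intro AE_completion) (rule AE_mp[OF _ AE_I2], auto intro: AE_completion)
qed


end
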